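(* The homeomorphism $f$ is such that $\lim_{s \to x^\pm} f'(s)$ exists at all $x \in \mathbb{T}$; $f'$ has exactly one break point of increase, denoted $a_0$, and at most countably many break points of decrease, denoted $\{a_i\}_{i \ge 1}$. This implies that $f'$ is continuous on $\mathbb{T} \setminus \{a_i\}_{i\ge 0}$ with positive one-sided limits everywhere. Furthermore, $f$ is concave on the arc $\mathbb{T} \setminus \{a_0\}$. Finally, $\log f'$ can be extended to a map with bounded variation.
   Context: Setting: an internal-wave billiard (unit-speed point particle in a planar table, reflected so that the angles of incident and reflected velocities with the vertical are equal) in a table of height $1/2$ with horizontal bases, a vertical left side, and right side the graph of a piecewise $C^1$, strictly decreasing, concave function (possibly plus a vertical segment at its lower end). The dynamics is unfolded to a unit-speed linear flow of direction $\theta\in(\alpha_M,\pi/2)$ on a 4-fold copy $\hat D$ of the table whose upper boundary is the graph of an even, piecewise $C^1$, concave function $b:[-1/2,1/2]\to\mathbb{R}^+$ non-increasing on $[0,1/2]$, opposite boundary points identified; $\alpha_M=\arctan b'(-1/2)$. $f:\mathbb{T}\to\mathbb{T}$ ($\mathbb{T}=\mathbb{R}/\mathbb{Z}$) is the first-return map to a horizontal cross-section of length 1; one has $f'(x)=\sin(\theta+\alpha(x_c(x)))/\sin(\theta-\alpha(x_c(x)))$ with $\alpha=\arctan b'$ and $x_c(x)$ the abscissa where the trajectory from $x$ first hits the upper boundary. A break point of $f'$ is an $x$ with $\Delta f'(x):=\lim_{s\to x^+}f'(s)-\lim_{s\to x^-}f'(s)\neq0$; it is of increase if $\Delta f'(x)>0$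 and of decrease if $\Delta f'(x)<0$. *)

theory Defs
  imports "HOL-Analysis.Analysis"
begin

definition piecewise_C1_on :: "(real \<Rightarrow> real) \<Rightarrow> real \<Rightarrow> real \<Rightarrow> bool" where
  "piecewise_C1_on b l u \<longleftrightarrow>
     (\<exists>ps::real list. ps \<noteq> [] \<and> sorted_wrt (<) ps \<and> hd ps = l \<and> last ps = u \<and>
        (\<forall>i < length ps - 1. \<exists>d. continuous_on {ps!i..ps!(i+1)} d \<and>
            (\<forall>x\<in>{ps!i..ps!(i+1)}. (b has_real_derivative d x) (at x within {ps!i..ps!(i+1)}))))"

definition per_ext :: "(real \<Rightarrow> real) \<Rightarrow> real \<Rightarrow> real" where
  "per_ext b X = b (X - real_of_int \<lfloor>X + 1/2\<rfloor>)"

text \<open>Lift to the real line of the abscissa x_c(x) where the trajectory of direction theta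
starting at (x,0) first hits the upper boundary y = b (periodically extended):
the unique X with X - b(X) cot theta = x.\<close>
definition hit_abscissa :: "(real \<Rightarrow> real) \<Rightarrow> real \<Rightarrow> real \<Rightarrow> real" where
  "hit_abscissa b \<theta> x = (THE X. X - per_ext b X * cot \<theta> = x)"

text \<open>Lift F : R -> R of the first-return map f : T -> T to the horizontal cross-section
{y = 0} of the unfolded table {(x,y) : |y| <= b(x)}, upper boundary point (x,b(x)) identified
with (x,-b(x)) and the vertical sides x = -1/2, x = 1/2 identified.
From (x,0) the trajectory hits (x_c, b(x_c)), reappears at (x_c,-b(x_c)) and returns to
y = 0 at x_c + b(x_c) cot theta.\<close>
definition return_lift :: "(real \<Rightarrow> real) \<Rightarrow> real \<Rightarrow> real \<Rightarrow> real" where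
  "return_lift b \<theta> x = hit_abscissa b \<theta> x + per_ext b (hit_abscissa b \<theta> x) * cot \<theta>"

definition diff_points :: "(real \<Rightarrow> real) \<Rightarrow> real set" where
  "diff_points F = {s. F differentiable (at s)}"

definition right_lim_deriv :: "(real \<Rightarrow> real) \<Rightarrow> real \<Rightarrow> real" where
  "right_lim_deriv F x = Lim (at x within ({x<..} \<inter> diff_points F)) (deriv F)"

definition left_lim_deriv :: "(real \<Rightarrow> real) \<Rightarrow> real \<Rightarrow> real" where
  "left_lim_deriv F x = Lim (at x within ({..<x} \<inter> diff_points F)) (deriv F)"

definition jump_deriv :: "(real \<Rightarrow> real) \<Rightarrow> real \<Rightarrow> real" where
  "jump_deriv F x = right_lim_deriv F x - left_lim_deriv F x"

definition bounded_variation_on :: "(real \<Rightarrow> real) \<Rightarrow> real \<Rightarrow> real \<Rightarrow> bool" where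
  "bounded_variation_on h a b \<longleftrightarrow>
     (\<exists>M. \<forall>ps::real list. sorted ps \<and> set ps \<subseteq> {a..b} \<longrightarrow>
        (\<Sum>i < length ps - 1. \<bar>h (ps!(i+1)) - h (ps!i)\<bar>) \<le> M)"

end

theory Submission
  imports Defs
begin


definition sl :: "(real \<Rightarrow> real) \<Rightarrow> real \<Rightarrow> real \<Rightarrow> real" where
  "sl F x y = (F y - F x) / (y - x)"

lemma sl_sym: "sl F x y = sl F y x"
  unfolding sl_def by (metis minus_diff_eq minus_divide_divide)

lemma conc_slope:
  assumes "concave_on I F" "x \<in> I" "y \<in> I" "x < t" "t < y"
  shows "sl F x y \<le> sl F x t" "sl F t y \<le> sl F x y"
proof -
  have cv: "convex_on I (\<lambda>z. - F z)" using assms(1) by (simp add: concave_on_def)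
  note a = convex_on_slope_le[OF cv assms(2,3,4,5)]
  have gen: "\<And>a b c d::real. (- a - - b) / (c - d) = - ((b - a) / (d - c))"
    by (metis minus_diff_eq minus_divide_right uminus_add_conv_diff diff_minus_eq_add add.commute)
  have e1: "(- F x - - F t) / (x - t) = - sl F x t" unfolding sl_def by (rule gen)
  have e2: "(- F x - - F y) / (x - y) = - sl F x y" unfolding sl_def by (rule gen)
  have e3: "(- F t - - F y) / (t - y) = - sl F t y" unfolding sl_def by (rule gen)
  show "sl F x y \<le> sl F x t" using a(1) e1 e2 by simp
  show "sl F t y \<le> sl F x y" using a(2) e2 e3 by simp
qed

lemma mono_lim_right:
  fixes f :: "real \<Rightarrow> real"
  assumes "x < v" and mono: "\<And>s t. x < s \<Longrightarrow> s \<le> t \<Longrightarrow> t \<le> v \<Longrightarrow> f t \<le> f s"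
    and bd: "\<And>s. x < s \<Longrightarrow> s \<le> v \<Longrightarrow> f s \<le> K"
  shows "\<exists>l. (f \<longlongrightarrow> l) (at_right x)"
proof -
  let ?S = "f ` {x<..v}"
  define l where "l = Sup ?S"
  have ne: "?S \<noteq> {}" using assms(1) by auto
  have bdd: "bdd_above ?S" using bd by (auto intro!: bdd_aboveI)
  have up: "\<And>s. x < s \<Longrightarrow> s \<le> v \<Longrightarrow> f s \<le> l" unfolding l_def using bdd by (auto intro!: cSup_upper)
  have "(f \<longlongrightarrow> l) (at_right x)"
  proof (rule tendstoI)
    fix e :: real assume "e > 0"
    then have "l - e < Sup ?S" by (simp add: l_def)
    then obtain y where y: "y \<in> ?S" "l - e < y" using less_cSup_iff[OF ne bdd] by auto
    then obtain s0 where s0: "x < s0" "s0 \<le> v" "l - e < f s0" by auto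
    show "eventually (\<lambda>s. dist (f s) l < e) (at_right x)"
      unfolding eventually_at_right_field
    proof (intro exI[of _ s0] conjI allI impI)
      fix s assume "x < s" "s < s0"
      then have "f s0 \<le> f s" "f s \<le> l" using mono[of s s0] up[of s] s0 by auto
      then show "dist (f s) l < e" using s0 \<open>e > 0\<close> by (simp add: dist_real_def)
    qed (use s0 in auto)
  qed
  then show ?thesis by blast
qed

lemma mono_lim_left:
  fixes f :: "real \<Rightarrow> real"
  assumes "u < x" and mono: "\<And>s t. u \<le> s \<Longrightarrow> s \<le> t \<Longrightarrow> t < x \<Longrightarrow> f t \<le> f s"
    and bd: "\<And>s. u \<le> s \<Longrightarrow> s < x \<Longrightarrow> K \<le> f s"
  shows "\<exists>l. (f \<longlongrightarrow> l) (at_left x)"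
proof -
  let ?S = "f ` {u..<x}"
  define l where "l = Inf ?S"
  have ne: "?S \<noteq> {}" using assms(1) by auto
  have bdd: "bdd_below ?S" using bd by (auto intro!: bdd_belowI)
  have up: "\<And>s. u \<le> s \<Longrightarrow> s < x \<Longrightarrow> l \<le> f s" unfolding l_def using bdd by (auto intro!: cInf_lower)
  have "(f \<longlongrightarrow> l) (at_left x)"
  proof (rule tendstoI)
    fix e :: real assume "e > 0"
    then have "Inf ?S < l + e" by (simp add: l_def)
    then obtain y where y: "y \<in> ?S" "y < l + e" using cInf_less_iff[OF ne bdd] by auto
    then obtain s0 where s0: "u \<le> s0" "s0 < x" "f s0 < l + e" by auto
    show "eventually (\<lambda>s. dist (f s) l < e) (at_left x)"
      unfolding eventually_at_left_field
    proof (intro exI[of _ s0] conjI allI impI)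
      fix s assume "s0 < s" "s < x"
      then have "f s \<le> f s0" "l \<le> f s" using mono[of s0 s] up[of s] s0 by auto
      then show "dist (f s) l < e" using s0 \<open>e > 0\<close> by (simp add: dist_real_def)
    qed (use s0 in auto)
  qed
  then show ?thesis by blast
qed




lemma per_int:
  fixes f :: "real \<Rightarrow> real"
  assumes "\<And>x. f (x + 1) = f x + c"
  shows "f (x + real_of_int k) = f x + real_of_int k * c"
proof -
  have n: "f (y + real n) = f y + real n * c" for y n
  proof (induction n)
    case (Suc n)
    have "f (y + real (Suc n)) = f ((y + real n) + 1)" by (simp add: algebra_simps)
    also have "\<dots> = f (y + real n) + c" by (rule assms)
    also have "\<dots> = f y + real (Suc n) * c" using Suc by (simp add: algebra_simps)
    finally show ?case .
  qed simp
  show ?thesis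
  proof (cases "k \<ge> 0")
    case True
    then obtain n where "k = int n" by (metis nonneg_int_cases)
    then show ?thesis using n[of x n] by simp
  next
    case False
    define n where "n = nat (- k)"
    have kn: "k = - int n" using False by (simp add: n_def)
    have "f x = f ((x - real n) + real n)" by simp
    also have "\<dots> = f (x - real n) + real n * c" by (rule n)
    finally show ?thesis using kn by (simp add: algebra_simps)
  qed
qed

locale cc =
  fixes F :: "real \<Rightarrow> real" and a0 m M A B :: real
  assumes cont: "continuous_on UNIV F"
    and per: "\<And>x. F (x + 1) = F x + 1"
    and conc0: "concave_on {a0..a0+1} F"
    and mpos: "0 < m"
    and chord: "\<And>s t. s < t \<Longrightarrow> m \<le> sl F s t \<and> sl F s t \<le> M"
    and limA: "(sl F a0 \<longlongrightarrow> A) (at_right a0)"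
    and limB: "(sl F a0 \<longlongrightarrow> B) (at_left a0)"
    and BA: "B < A"
begin

lemma perk: "F (x + real_of_int k) = F x + real_of_int k"
  using per_int[of F 1 x k] per by simp

lemma conck: "concave_on {a0 + real_of_int k .. a0 + real_of_int k + 1} F"
  unfolding concave_on_iff
proof (intro conjI ballI allI impI)
  show "convex {a0 + real_of_int k .. a0 + real_of_int k + 1}" by (rule convex_real_interval)
  fix x y u v :: real
  assume x: "x \<in> {a0 + real_of_int k .. a0 + real_of_int k + 1}" and y: "y \<in> {a0 + real_of_int k .. a0 + real_of_int k + 1}"
    and u: "0 \<le> u" and v: "0 \<le> v" and uv: "u + v = 1"
  have x': "x - real_of_int k \<in> {a0..a0+1}" and y': "y - real_of_int k \<in> {a0..a0+1}" using x y by auto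
  have c: "F (u * (x - real_of_int k) + v * (y - real_of_int k)) \<ge> u * F (x - real_of_int k) + v * F (y - real_of_int k)"
    using conc0 x' y' u v uv unfolding concave_on_iff by auto
  have e: "u * x + v * y = (u * (x - real_of_int k) + v * (y - real_of_int k)) + real_of_int k"
    using uv by (simp add: algebra_simps) (metis distrib_right mult_1 uv)
  have Fx: "F x = F (x - real_of_int k) + real_of_int k" using perk[of "x - real_of_int k" k] by simp
  have Fy: "F y = F (y - real_of_int k) + real_of_int k" using perk[of "y - real_of_int k" k] by simp
  have "F (u * x + v * y) = F (u * (x - real_of_int k) + v * (y - real_of_int k)) + real_of_int k"
    using e perk by metis
  also have "\<dots> \<ge> u * F (x - real_of_int k) + v * F (y - real_of_int k) + real_of_int k" using c by simp
  finally have "F (u * x + v * y) \<ge> u * F (x - real_of_int k) + v * F (y - real_of_int k) + real_of_int k" .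
  moreover have "u * F x + v * F y = u * F (x - real_of_int k) + v * F (y - real_of_int k) + real_of_int k"
    unfolding Fx Fy using uv by (simp add: algebra_simps) (metis distrib_right mult_1 uv)
  ultimately show "u * F x + v * F y \<le> F (u *\<^sub>R x + v *\<^sub>R y)" by simp
qed

lemma right_int: obtains u where "concave_on {u..u+1} F" "u \<le> x" "x < u + 1"
proof -
  define k where "k = \<lfloor>x - a0\<rfloor>"
  have "a0 + real_of_int k \<le> x" "x < a0 + real_of_int k + 1" unfolding k_def
    by (linarith, linarith)
  then show ?thesis using that[of "a0 + real_of_int k"] conck[of k] by simp
qed

lemma left_int: obtains u where "concave_on {u..u+1} F" "u < x" "x \<le> u + 1"
proof -
  define k where "k = \<lceil>x - a0\<rceil> - 1"
  have "a0 + real_of_int k < x" "x \<le> a0 + real_of_int k + 1" unfolding k_def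
    by (simp, linarith, simp, linarith)
  then show ?thesis using that[of "a0 + real_of_int k"] conck[of k] by simp
qed

lemma ex_right: assumes "concave_on {u..v} F" "u \<le> x" "x < v"
  shows "\<exists>l. (sl F x \<longlongrightarrow> l) (at_right x)"
proof (rule mono_lim_right[of x v _ M])
  fix s t assume "x < s" "s \<le> t" "t \<le> v"
  then show "sl F x t \<le> sl F x s"
    using conc_slope(1)[OF assms(1), of x t s] assms by (cases "s = t") auto
qed (use assms chord in auto)

lemma ex_left: assumes "concave_on {u..v} F" "u < x" "x \<le> v"
  shows "\<exists>l. (sl F x \<longlongrightarrow> l) (at_left x)"
proof (rule mono_lim_left[of u x _ m])
  fix s t assume "u \<le> s" "s \<le> t" "t < x"
  then show "sl F x t \<le> sl F x s"
    using conc_slope(2)[OF assms(1), of s x t] assms by (cases "s = t") (auto simp: sl_sym)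
qed (use assms chord in \<open>auto simp: sl_sym\<close>)

definition Dp where "Dp x = Lim (at_right x) (sl F x)"
definition Dm where "Dm x = Lim (at_left x) (sl F x)"

lemma Dp_lim: "(sl F x \<longlongrightarrow> Dp x) (at_right x)"
proof -
  obtain u where "concave_on {u..u+1} F" "u \<le> x" "x < u + 1" by (rule right_int)
  then obtain l where l: "(sl F x \<longlongrightarrow> l) (at_right x)" using ex_right by blast
  then have "Dp x = l" unfolding Dp_def by (intro tendsto_Lim) auto
  then show ?thesis using l by simp
qed

lemma Dm_lim: "(sl F x \<longlongrightarrow> Dm x) (at_left x)"
proof -
  obtain u where "concave_on {u..u+1} F" "u < x" "x \<le> u + 1" by (rule left_int)
  then obtain l where l: "(sl F x \<longlongrightarrow> l) (at_left x)" using ex_left by blast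
  then have "Dm x = l" unfolding Dm_def by (intro tendsto_Lim) auto
  then show ?thesis using l by simp
qed

lemma G1: assumes "concave_on {u..v} F" "u \<le> x" "x < t" "t \<le> v"
  shows "sl F x t \<le> Dp x"
proof (rule tendsto_lowerbound[OF Dp_lim])
  show "eventually (\<lambda>s. sl F x t \<le> sl F x s) (at_right x)"
    unfolding eventually_at_right_field
    using assms conc_slope(1)[OF assms(1), of x t] by (intro exI[of _ t]) auto
qed simp

lemma G2: assumes "concave_on {u..v} F" "u \<le> s" "s < x" "x \<le> v"
  shows "Dm x \<le> sl F s x"
proof (rule tendsto_upperbound[OF Dm_lim])
  show "eventually (\<lambda>r. sl F x r \<le> sl F s x) (at_left x)"
    unfolding eventually_at_left_field
    using assms conc_slope(2)[OF assms(1), of s x] by (intro exI[of _ s]) (auto simp: sl_sym)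
qed simp

lemma G3: assumes "concave_on {u..v} F" "u \<le> s" "s < x" "x < v"
  shows "Dp x \<le> sl F s x"
proof (rule tendsto_upperbound[OF Dp_lim])
  show "eventually (\<lambda>r. sl F x r \<le> sl F s x) (at_right x)"
    unfolding eventually_at_right_field
  proof (intro exI[of _ v] conjI allI impI)
    fix r assume "x < r" "r < v"
    then show "sl F x r \<le> sl F s x"
      using assms conc_slope[OF assms(1), of s r x] by force
  qed (use assms in auto)
qed simp

lemma G4: assumes "concave_on {u..v} F" "u < x" "x < t" "t \<le> v"
  shows "sl F x t \<le> Dm x"
proof (rule tendsto_lowerbound[OF Dm_lim])
  show "eventually (\<lambda>r. sl F x t \<le> sl F x r) (at_left x)"
    unfolding eventually_at_left_field
  proof (intro exI[of _ u] conjI allI impI)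
    fix r assume "u < r" "r < x"
    then show "sl F x t \<le> sl F x r"
      using assms conc_slope[OF assms(1), of r t x] by (force simp: sl_sym)
  qed (use assms in auto)
qed simp

lemma G5: assumes "concave_on {u..v} F" "u < x" "x < v"
  shows "Dp x \<le> Dm x"
proof (rule tendsto_upperbound[OF Dp_lim])
  show "eventually (\<lambda>t. sl F x t \<le> Dm x) (at_right x)"
    unfolding eventually_at_right_field
    using assms G4[OF assms(1,2)] by (intro exI[of _ v]) auto
qed simp

lemma Dp_bd: "m \<le> Dp x \<and> Dp x \<le> M"
proof
  show "m \<le> Dp x"
    by (rule tendsto_lowerbound[OF Dp_lim]) (auto simp: eventually_at_right_field chord intro!: exI[of _ "x+1"])
  show "Dp x \<le> M"
    by (rule tendsto_upperbound[OF Dp_lim]) (auto simp: eventually_at_right_field chord intro!: exI[of _ "x+1"])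
qed

lemma Dm_bd: "m \<le> Dm x \<and> Dm x \<le> M"
proof
  show "m \<le> Dm x"
    by (rule tendsto_lowerbound[OF Dm_lim]) (auto simp: eventually_at_left_field chord sl_sym[of F x] intro!: exI[of _ "x-1"])
  show "Dm x \<le> M"
    by (rule tendsto_upperbound[OF Dm_lim]) (auto simp: eventually_at_left_field chord sl_sym[of F x] intro!: exI[of _ "x-1"])
qed

lemma sl_per: "sl F (x + 1) (y + 1) = sl F x y"
  unfolding sl_def per by simp

lemma Dp_per: "Dp (x + 1) = Dp x"
proof -
  have "(sl F (x + 1) \<longlongrightarrow> Dp x) (at_right (x + 1))"
  proof (rule tendstoI)
    fix e :: real assume "e > 0"
    then have "eventually (\<lambda>y. dist (sl F x y) (Dp x) < e) (at_right x)" using Dp_lim tendstoD by blast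
    then obtain b where b: "b > x" "\<And>y. x < y \<Longrightarrow> y < b \<Longrightarrow> dist (sl F x y) (Dp x) < e"
      unfolding eventually_at_right_field by blast
    show "eventually (\<lambda>y. dist (sl F (x + 1) y) (Dp x) < e) (at_right (x + 1))"
      unfolding eventually_at_right_field
    proof (intro exI[of _ "b + 1"] conjI allI impI)
      fix y assume "x + 1 < y" "y < b + 1"
      then show "dist (sl F (x + 1) y) (Dp x) < e"
        using b(2)[of "y - 1"] sl_per[of x "y - 1"] by simp
    qed (use b in simp)
  qed
  then show ?thesis unfolding Dp_def[of "x+1"] by (intro tendsto_Lim) auto
qed

lemma Dm_per: "Dm (x + 1) = Dm x"
proof -
  have "(sl F (x + 1) \<longlongrightarrow> Dm x) (at_left (x + 1))"
  proof (rule tendstoI)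
    fix e :: real assume "e > 0"
    then have "eventually (\<lambda>y. dist (sl F x y) (Dm x) < e) (at_left x)" using Dm_lim tendstoD by blast
    then obtain b where b: "b < x" "\<And>y. b < y \<Longrightarrow> y < x \<Longrightarrow> dist (sl F x y) (Dm x) < e"
      unfolding eventually_at_left_field by blast
    show "eventually (\<lambda>y. dist (sl F (x + 1) y) (Dm x) < e) (at_left (x + 1))"
      unfolding eventually_at_left_field
    proof (intro exI[of _ "b + 1"] conjI allI impI)
      fix y assume "b + 1 < y" "y < x + 1"
      then show "dist (sl F (x + 1) y) (Dm x) < e"
        using b(2)[of "y - 1"] sl_per[of x "y - 1"] by simp
    qed (use b in simp)
  qed
  then show ?thesis unfolding Dm_def[of "x+1"] by (intro tendsto_Lim) auto
qed

lemma Dp_a0: "Dp (a0 + real_of_int k) = A"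
proof -
  have "Dp a0 = A" unfolding Dp_def using limA by (intro tendsto_Lim) auto
  then show ?thesis using per_int[of Dp 0 a0 k] Dp_per by simp
qed

lemma Dm_a0: "Dm (a0 + real_of_int k) = B"
proof -
  have "Dm a0 = B" unfolding Dm_def using limB by (intro tendsto_Lim) auto
  then show ?thesis using per_int[of Dm 0 a0 k] Dm_per by simp
qed

end



lemma bv_mono:
  fixes w :: "real \<Rightarrow> real"
  assumes mono: "\<And>x y. a \<le> x \<Longrightarrow> x \<le> y \<Longrightarrow> y \<le> b \<Longrightarrow> w x \<le> w y"
    and bd: "\<And>x. a \<le> x \<Longrightarrow> x \<le> b \<Longrightarrow> \<bar>w x\<bar> \<le> K" and K: "0 \<le> K"
    and ps: "sorted ps" "set ps \<subseteq> {a..b}"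
  shows "(\<Sum>i < length ps - 1. \<bar>w (ps!(i+1)) - w (ps!i)\<bar>) \<le> 2 * K"
proof -
  have inab: "a \<le> ps!i \<and> ps!i \<le> b" if "i < length ps" for i
    using ps(2) nth_mem[OF that] by auto
  have "(\<Sum>i < length ps - 1. \<bar>w (ps!(i+1)) - w (ps!i)\<bar>) = (\<Sum>i < length ps - 1. w (ps!(Suc i)) - w (ps!i))"
  proof (rule sum.cong)
    fix i assume "i \<in> {..<length ps - 1}"
    then have i: "Suc i < length ps" by auto
    have "ps!i \<le> ps!(Suc i)" using ps(1) i by (simp add: sorted_iff_nth_mono)
    then have "w (ps!i) \<le> w (ps!(Suc i))" using mono inab[of i] inab[OF i] i by auto
    then show "\<bar>w (ps!(i+1)) - w (ps!i)\<bar> = w (ps!(Suc i)) - w (ps!i)" by simp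
  qed simp
  also have "\<dots> = w (ps!(length ps - 1)) - w (ps!0)" by (rule sum_lessThan_telescope)
  also have "\<dots> \<le> 2 * K"
  proof (cases "length ps - 1 = 0")
    case True then show ?thesis using K by simp
  next
    case False
    then have "length ps - 1 < length ps" "0 < length ps" by auto
    then show ?thesis using bd inab[of "length ps - 1"] inab[of 0] by (smt (verit))
  qed
  finally show ?thesis .
qed

lemma bv_diff:
  fixes h w1 w2 :: "real \<Rightarrow> real"
  assumes "\<And>x. h x = w1 x - w2 x"
  shows "(\<Sum>i < n. \<bar>h (ps!(i+1)) - h (ps!i)\<bar>) \<le>
     (\<Sum>i < n. \<bar>w1 (ps!(i+1)) - w1 (ps!i)\<bar>) + (\<Sum>i < n. \<bar>w2 (ps!(i+1)) - w2 (ps!i)\<bar>)"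
  unfolding sum.distrib[symmetric] assms by (rule sum_mono) linarith

context cc begin

lemma sl_eq: "sl F x = (\<lambda>y. (F y - F x) / (y - x))"
  by (rule ext) (simp add: sl_def)

lemma diffD: assumes "F differentiable (at x)"
  shows "Dp x = deriv F x" "Dm x = deriv F x"
proof -
  have "(F has_real_derivative deriv F x) (at x)" using assms DERIV_deriv_iff_real_differentiable by blast
  then have "(sl F x \<longlongrightarrow> deriv F x) (at x)" unfolding has_field_derivative_iff sl_eq .
  then have r: "(sl F x \<longlongrightarrow> deriv F x) (at_right x)" and l: "(sl F x \<longlongrightarrow> deriv F x) (at_left x)"
    using filterlim_at_split by blast+
  show "Dp x = deriv F x" using tendsto_unique[OF _ Dp_lim r] by simp
  show "Dm x = deriv F x" using tendsto_unique[OF _ Dm_lim l] by simp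
qed

lemma diffI: assumes "Dp x = Dm x"
  shows "(F has_real_derivative Dp x) (at x)"
  unfolding has_field_derivative_iff sl_eq[symmetric] filterlim_at_split
  using Dp_lim[of x] Dm_lim[of x] assms by simp

lemma diffI': assumes "Dp x = Dm x"
  shows "x \<in> diff_points F" "deriv F x = Dp x"
  using diffI[OF assms] unfolding diff_points_def
  by (auto simp: real_differentiable_def DERIV_imp_deriv)

lemma N_count: "countable {x. Dp x \<noteq> Dm x}"
proof -
  let ?Z = "range (\<lambda>k::int. a0 + real_of_int k)"
  let ?N = "{x. Dp x \<noteq> Dm x} - ?Z"
  have lt: "Dp x < Dm x" if "x \<in> ?N" for x
  proof -
    define u where "u = a0 + real_of_int \<lfloor>x - a0\<rfloor>"
    have cu: "concave_on {u..u+1} F" unfolding u_def using conck by simp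
    have "u \<le> x" "x < u + 1" unfolding u_def by linarith+
    moreover have "x \<noteq> u" using that unfolding u_def by auto
    ultimately have "Dp x \<le> Dm x" using G5[OF cu] by simp
    then show ?thesis using that by simp
  qed
  define r where "r x = (SOME q. q \<in> \<rat> \<and> Dp x < q \<and> q < Dm x)" for x
  have r: "r x \<in> \<rat> \<and> Dp x < r x \<and> r x < Dm x" if xN: "x \<in> ?N" for x
  proof -
    have "\<exists>q. q \<in> \<rat> \<and> Dp x < q \<and> q < Dm x" using Rats_dense_in_real[OF lt[OF xN]] by blast
    then show ?thesis unfolding r_def by (rule someI_ex)
  qed
  have key: "r y < r x" if "x \<in> ?N" "y \<in> ?N" "\<lfloor>x - a0\<rfloor> = \<lfloor>y - a0\<rfloor>" "x < y" for x y
  proof -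
    define u where "u = a0 + real_of_int \<lfloor>x - a0\<rfloor>"
    have cu: "concave_on {u..u+1} F" unfolding u_def using conck by simp
    have "u \<le> x" "y < u + 1" using that(3) unfolding u_def by linarith+
    then have "Dm y \<le> sl F x y" "sl F x y \<le> Dp x" using G2[OF cu, of x y] G1[OF cu, of x y] that by auto
    then show ?thesis using r[OF that(1)] r[OF that(2)] by simp
  qed
  define \<phi> where "\<phi> x = (\<lfloor>x - a0\<rfloor>, r x)" for x
  have inj: "inj_on \<phi> ?N"
  proof (rule inj_onI)
    fix x y assume x: "x \<in> ?N" and y: "y \<in> ?N" and eq: "\<phi> x = \<phi> y"
    then have k: "\<lfloor>x - a0\<rfloor> = \<lfloor>y - a0\<rfloor>" and rr: "r x = r y" unfolding \<phi>_def by auto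
    show "x = y"
    proof (rule ccontr)
      assume "x \<noteq> y"
      then consider "x < y" | "y < x" by linarith
      then show False
      proof cases
        case 1 then show False using key[OF x y k] rr by simp
      next
        case 2 then show False using key[OF y x k[symmetric]] rr by simp
      qed
    qed
  qed
  have "\<phi> ` ?N \<subseteq> (UNIV::int set) \<times> \<rat>" using r unfolding \<phi>_def by auto
  moreover have "countable ((UNIV::int set) \<times> (\<rat>::real set))" using countable_rat by (intro countable_SIGMA) auto
  ultimately have "countable (\<phi> ` ?N)" by (rule countable_subset)
  then have "countable ?N" using inj by (rule countable_image_inj_on)
  moreover have "countable ?Z" by (rule countable_image) simp
  ultimately have "countable (?Z \<union> ?N)" by (rule countable_Un[rotated])
  then show ?thesis by (rule countable_subset[rotated]) auto
qed

lemma D_big: "- {x. Dp x \<noteq> Dm x} \<subseteq> diff_points F"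
  using diffI' by auto

lemma dense_r: fixes x :: real assumes "countable C" shows "x islimpt ({x<..} \<inter> - C)"
  unfolding islimpt_approachable
proof (intro allI impI)
  fix e :: real assume "e > 0"
  have "\<not> {x<..<x+e} \<subseteq> C"
    using uncountable_open_interval[of x "x+e"] \<open>e > 0\<close> countable_subset assms by auto
  then obtain y where "y \<in> {x<..<x+e}" "y \<notin> C" by blast
  then show "\<exists>x'\<in>{x<..} \<inter> - C. x' \<noteq> x \<and> dist x' x < e"
    by (intro bexI[of _ y]) (auto simp: dist_real_def)
qed

lemma dense_l: fixes x :: real assumes "countable C" shows "x islimpt ({..<x} \<inter> - C)"
  unfolding islimpt_approachable
proof (intro allI impI)
  fix e :: real assume "e > 0"
  have "\<not> {x-e<..<x} \<subseteq> C"
    using uncountable_open_interval[of "x-e" x] \<open>e > 0\<close> countable_subset assms by auto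
  then obtain y where "y \<in> {x-e<..<x}" "y \<notin> C" by blast
  then show "\<exists>x'\<in>{..<x} \<inter> - C. x' \<noteq> x \<and> dist x' x < e"
    by (intro bexI[of _ y]) (auto simp: dist_real_def)
qed

lemma nontriv_r: "\<not> trivial_limit (at x within ({x<..} \<inter> diff_points F))"
  unfolding trivial_limit_within
  using islimpt_subset[OF dense_r[OF N_count, of x]] D_big by blast

lemma nontriv_l: "\<not> trivial_limit (at x within ({..<x} \<inter> diff_points F))"
  unfolding trivial_limit_within
  using islimpt_subset[OF dense_l[OF N_count, of x]] D_big by blast

lemma isc: "isCont F x"
  using cont by (simp add: continuous_on_eq_continuous_at)

lemma RL: "(deriv F \<longlongrightarrow> Dp x) (at x within ({x<..} \<inter> diff_points F))"
proof (rule tendstoI)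
  fix e :: real assume e: "e > 0"
  obtain u where cu: "concave_on {u..u+1} F" "u \<le> x" "x < u+1" by (rule right_int)
  have "eventually (\<lambda>y. dist (sl F x y) (Dp x) < e/2) (at_right x)" using tendstoD[OF Dp_lim[of x], of "e/2"] e by simp
  then obtain b where b: "b > x" "\<And>y. x < y \<Longrightarrow> y < b \<Longrightarrow> dist (sl F x y) (Dp x) < e/2"
    unfolding eventually_at_right_field by blast
  define t' where "t' = (x + min b (u+1)) / 2"
  have t': "x < t'" "t' < b" "t' < u + 1" unfolding t'_def using b cu by auto
  have sx: "Dp x - e/2 < sl F x t'" using b(2)[OF t'(1,2)] unfolding dist_real_def by arith
  have "((\<lambda>t. (F t' - F t) / (t' - t)) \<longlongrightarrow> (F t' - F x) / (t' - x)) (at x)"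
    using isContD[OF isc[of x]] t' by (intro tendsto_intros) auto
  then have "((\<lambda>t. sl F t t') \<longlongrightarrow> sl F x t') (at x)" by (simp add: sl_def)
  then have "eventually (\<lambda>t. dist (sl F t t') (sl F x t') < e/2) (at x)" using e by (intro tendstoD) auto
  then obtain d where d: "d > 0" "\<And>t. t \<noteq> x \<Longrightarrow> dist t x < d \<Longrightarrow> dist (sl F t t') (sl F x t') < e/2"
    unfolding eventually_at by auto
  show "eventually (\<lambda>t. dist (deriv F t) (Dp x) < e) (at x within ({x<..} \<inter> diff_points F))"
    unfolding eventually_at
  proof (intro exI[of _ "min d (t' - x)"] conjI ballI impI)
    fix t assume t: "t \<in> {x<..} \<inter> diff_points F" and td: "t \<noteq> x \<and> dist t x < min d (t' - x)"
    then have xt: "x < t" "t < t'" by (auto simp: dist_real_def)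
    have dif: "F differentiable (at t)" using t unfolding diff_points_def by auto
    have "Dp t \<ge> sl F t t'" using G1[OF cu(1), of t t'] xt cu t' by simp
    moreover have "dist (sl F t t') (sl F x t') < e/2" using d(2)[of t] td by auto
    moreover have "Dm t \<le> sl F x t" using G2[OF cu(1), of x t] xt cu t' by simp
    moreover have "sl F x t \<le> Dp x" using G1[OF cu(1), of x t] xt cu t' by simp
    ultimately show "dist (deriv F t) (Dp x) < e"
      using diffD[OF dif] sx unfolding dist_real_def by arith
  qed (use d t' in auto)
qed

lemma LL: "(deriv F \<longlongrightarrow> Dm x) (at x within ({..<x} \<inter> diff_points F))"
proof (rule tendstoI)
  fix e :: real assume e: "e > 0"
  obtain u where cu: "concave_on {u..u+1} F" "u < x" "x \<le> u+1" by (rule left_int)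
  have "eventually (\<lambda>y. dist (sl F x y) (Dm x) < e/2) (at_left x)" using tendstoD[OF Dm_lim[of x], of "e/2"] e by simp
  then obtain b where b: "b < x" "\<And>y. b < y \<Longrightarrow> y < x \<Longrightarrow> dist (sl F x y) (Dm x) < e/2"
    unfolding eventually_at_left_field by blast
  define t' where "t' = (max b u + x) / 2"
  have t': "t' < x" "b < t'" "u < t'" unfolding t'_def using b cu by auto
  have sx: "sl F t' x < Dm x + e/2" using b(2)[OF t'(2,1)] sl_sym[of F x t'] unfolding dist_real_def by arith
  have "((\<lambda>t. (F t - F t') / (t - t')) \<longlongrightarrow> (F x - F t') / (x - t')) (at x)"
    using isContD[OF isc[of x]] t' by (intro tendsto_intros) auto
  then have "((\<lambda>t. sl F t' t) \<longlongrightarrow> sl F t' x) (at x)" by (simp add: sl_def)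
  then have "eventually (\<lambda>t. dist (sl F t' t) (sl F t' x) < e/2) (at x)" using e by (intro tendstoD) auto
  then obtain d where d: "d > 0" "\<And>t. t \<noteq> x \<Longrightarrow> dist t x < d \<Longrightarrow> dist (sl F t' t) (sl F t' x) < e/2"
    unfolding eventually_at by auto
  show "eventually (\<lambda>t. dist (deriv F t) (Dm x) < e) (at x within ({..<x} \<inter> diff_points F))"
    unfolding eventually_at
  proof (intro exI[of _ "min d (x - t')"] conjI ballI impI)
    fix t assume t: "t \<in> {..<x} \<inter> diff_points F" and td: "t \<noteq> x \<and> dist t x < min d (x - t')"
    then have xt: "t < x" "t' < t" by (auto simp: dist_real_def)
    have dif: "F differentiable (at t)" using t unfolding diff_points_def by auto
    have "Dm t \<le> sl F t' t" using G2[OF cu(1), of t' t] xt cu t' by simp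
    moreover have "dist (sl F t' t) (sl F t' x) < e/2" using d(2)[of t] td by auto
    moreover have "Dp t \<ge> sl F t x" using G1[OF cu(1), of t x] xt cu t' by simp
    moreover have "Dm x \<le> sl F t x" using G2[OF cu(1), of t x] xt cu t' by simp
    ultimately show "dist (deriv F t) (Dm x) < e"
      using diffD[OF dif] sx unfolding dist_real_def by arith
  qed (use d t' in auto)
qed

lemma rl: "right_lim_deriv F x = Dp x"
  unfolding right_lim_deriv_def by (rule tendsto_Lim[OF nontriv_r RL])

lemma ll: "left_lim_deriv F x = Dm x"
  unfolding left_lim_deriv_def by (rule tendsto_Lim[OF nontriv_l LL])

lemma jd: "jump_deriv F x = Dp x - Dm x"
  unfolding jump_deriv_def rl ll ..

end



context cc begin

lemma Dp_mono: assumes "u = a0 + real_of_int k" "u \<le> x" "x < y" "y < u + 1"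
  shows "Dp y \<le> Dp x"
proof -
  have cu: "concave_on {u..u+1} F" using conck[of k] assms(1) by simp
  have "Dp y \<le> sl F x y" using G3[OF cu, of x y] assms by simp
  also have "\<dots> \<le> Dp x" using G1[OF cu, of x y] assms by simp
  finally show ?thesis .
qed

lemma cont_zero: assumes "Dp x = Dm x"
  shows "continuous (at x within diff_points F) (deriv F)"
  unfolding continuous_within
proof (rule tendstoI)
  fix e :: real assume e: "e > 0"
  have dx: "deriv F x = Dp x" using diffI'[OF assms] by simp
  obtain d1 where d1: "d1 > 0" "\<And>t. t \<in> {x<..} \<inter> diff_points F \<Longrightarrow> t \<noteq> x \<and> dist t x < d1 \<Longrightarrow> dist (deriv F t) (Dp x) < e"
    using tendstoD[OF RL[of x] e] unfolding eventually_at by blast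
  obtain d2 where d2: "d2 > 0" "\<And>t. t \<in> {..<x} \<inter> diff_points F \<Longrightarrow> t \<noteq> x \<and> dist t x < d2 \<Longrightarrow> dist (deriv F t) (Dm x) < e"
    using tendstoD[OF LL[of x] e] unfolding eventually_at by blast
  show "eventually (\<lambda>t. dist (deriv F t) (deriv F x) < e) (at x within diff_points F)"
    unfolding eventually_at
  proof (intro exI[of _ "min d1 d2"] conjI ballI impI)
    fix t assume t: "t \<in> diff_points F" "t \<noteq> x \<and> dist t x < min d1 d2"
    show "dist (deriv F t) (deriv F x) < e"
    proof (cases "t < x")
      case True then show ?thesis using d2(2)[of t] t dx assms by auto
    next
      case False then have "x < t" using t by auto
      then show ?thesis using d1(2)[of t] t dx by auto
    qed
  qed (use d1 d2 in auto)
qed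

theorem main:
  "(\<forall>x. (\<exists>l. (deriv F \<longlongrightarrow> l) (at x within ({x<..} \<inter> diff_points F)))
           \<and> (\<exists>l. (deriv F \<longlongrightarrow> l) (at x within ({..<x} \<inter> diff_points F))))
     \<and> (\<exists>a0. {x. jump_deriv F x > 0} = {a0 + real_of_int k | k. True}
        \<and> countable {x. jump_deriv F x < 0}
        \<and> (\<forall>x. jump_deriv F x = 0 \<longrightarrow>
              x \<in> diff_points F \<and> continuous (at x within diff_points F) (deriv F))
        \<and> (\<forall>x. right_lim_deriv F x > 0 \<and> left_lim_deriv F x > 0)
        \<and> concave_on {a0<..<a0+1} F
        \<and> (\<exists>h. (\<forall>x\<in>diff_points F. h x = ln (deriv F x)) \<and> (\<forall>x. h (x + 1) = h x)
               \<and> bounded_variation_on h 0 1))"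
proof (rule conjI)
  show "\<forall>x. (\<exists>l. (deriv F \<longlongrightarrow> l) (at x within ({x<..} \<inter> diff_points F)))
           \<and> (\<exists>l. (deriv F \<longlongrightarrow> l) (at x within ({..<x} \<inter> diff_points F)))" using RL LL by blast
next
 show "\<exists>a0. {x. jump_deriv F x > 0} = {a0 + real_of_int k | k. True}
        \<and> countable {x. jump_deriv F x < 0}
        \<and> (\<forall>x. jump_deriv F x = 0 \<longrightarrow>
              x \<in> diff_points F \<and> continuous (at x within diff_points F) (deriv F))
        \<and> (\<forall>x. right_lim_deriv F x > 0 \<and> left_lim_deriv F x > 0)
        \<and> concave_on {a0<..<a0+1} F
        \<and> (\<exists>h. (\<forall>x\<in>diff_points F. h x = ln (deriv F x)) \<and> (\<forall>x. h (x + 1) = h x)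
               \<and> bounded_variation_on h 0 1)"
 proof (intro conjI allI exI[of _ a0])
  show "{x. jump_deriv F x > 0} = {a0 + real_of_int k | k. True}"
  proof (intro set_eqI iffI)
    fix x assume "x \<in> {x. jump_deriv F x > 0}"
    then have pos: "Dp x - Dm x > 0" by (simp add: jd)
    define u where "u = a0 + real_of_int \<lfloor>x - a0\<rfloor>"
    have cu: "concave_on {u..u+1} F" unfolding u_def using conck by simp
    have ux: "u \<le> x" "x < u + 1" unfolding u_def by linarith+
    have "x = u"
    proof (rule ccontr)
      assume "x \<noteq> u"
      then have "Dp x \<le> Dm x" using G5[OF cu] ux by simp
      then show False using pos by simp
    qed
    then show "x \<in> {a0 + real_of_int k | k. True}" unfolding u_def by blast
  next
    fix x assume "x \<in> {a0 + real_of_int k | k. True}"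
    then obtain k where "x = a0 + real_of_int k" by blast
    then show "x \<in> {x. jump_deriv F x > 0}" using Dp_a0 Dm_a0 BA by (simp add: jd)
  qed
next
  show "countable {x. jump_deriv F x < 0}"
    by (rule countable_subset[OF _ N_count]) (auto simp: jd)
next
  fix x
  show "jump_deriv F x = 0 \<longrightarrow> x \<in> diff_points F \<and> continuous (at x within diff_points F) (deriv F)"
    using diffI' cont_zero by (simp add: jd)
next
  fix x
  show "right_lim_deriv F x > 0" using Dp_bd[of x] mpos by (simp add: rl)
  show "left_lim_deriv F x > 0" using Dm_bd[of x] mpos by (simp add: ll)
next
  show "concave_on {a0<..<a0+1} F"
    using conc0 unfolding concave_on_def
    by (rule convex_on_subset) (auto intro: convex_real_interval)
next
  define h where "h x = ln (Dp x)" for x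
  have hD: "\<forall>x\<in>diff_points F. h x = ln (deriv F x)"
    unfolding h_def diff_points_def using diffD by auto
  have hp: "\<forall>x. h (x + 1) = h x" unfolding h_def using Dp_per by simp
  define B0 where "B0 = \<bar>ln m\<bar> + \<bar>ln M\<bar>"
  have hb: "\<bar>h x\<bar> \<le> B0" for x
  proof -
    have "m \<le> Dp x" "Dp x \<le> M" using Dp_bd by auto
    then have "ln m \<le> h x" "h x \<le> ln M" unfolding h_def using mpos by auto
    then show ?thesis unfolding B0_def by linarith
  qed
  have B0: "0 \<le> B0" unfolding B0_def by simp
  define a' where "a' = a0 + real_of_int (- \<lfloor>a0\<rfloor>)"
  have a': "0 \<le> a'" "a' < 1" unfolding a'_def by linarith+
  have hmono: "h y \<le> h x" if "u = a0 + real_of_int k" "u \<le> x" "x \<le> y" "y < u + 1" for u k x y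
  proof (cases "x = y")
    case False
    then have "Dp y \<le> Dp x" using Dp_mono[OF that(1,2) _ that(4)] that by simp
    then show ?thesis unfolding h_def using Dp_bd[of y] mpos by simp
  qed simp
  define C where "C = 2 * B0"
  define w1 where "w1 x = (if a' \<le> x then C else 0) + (if a' + 1 \<le> x then C else 0)" for x
  define w2 where "w2 x = w1 x - h x" for x
  have hw: "\<And>x. h x = w1 x - w2 x" unfolding w2_def by simp
  have w1m: "w1 x \<le> w1 y" if "x \<le> y" for x y using that B0 unfolding w1_def C_def by auto
  have w1b: "\<bar>w1 x\<bar> \<le> 2 * C" for x using B0 unfolding w1_def C_def by auto
  have w2b: "\<bar>w2 x\<bar> \<le> 2 * C + B0" for x using w1b[of x] hb[of x] unfolding w2_def by linarith
  have w2m: "w2 x \<le> w2 y" if "0 \<le> x" "x \<le> y" "y \<le> 1" for x y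
  proof -
    consider "y < a'" | "x < a'" "a' \<le> y" | "a' \<le> x" "y < a' + 1"
      | "a' \<le> x" "x < a' + 1" "a' + 1 \<le> y" | "a' + 1 \<le> x" by linarith
    then show ?thesis
    proof cases
      case 1
      have "h y \<le> h x" using hmono[of "a' - 1" "- \<lfloor>a0\<rfloor> - 1" x y] that 1 a' unfolding a'_def by simp
      then show ?thesis unfolding w2_def w1_def using 1 that by simp
    next
      case 2
      have "y < a' + 1" using 2 that by linarith
      then show ?thesis unfolding w2_def w1_def C_def using 2 hb[of x] hb[of y] by simp
    next
      case 3
      have "h y \<le> h x" using hmono[of "a'" "- \<lfloor>a0\<rfloor>" x y] that 3 unfolding a'_def by simp
      then show ?thesis unfolding w2_def w1_def using 3 that by simp
    next
      case 4
      then show ?thesis unfolding w2_def w1_def C_def using hb[of x] hb[of y] by simp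
    next
      case 5
      then have "x = y" using that a' by linarith
      then show ?thesis by simp
    qed
  qed
  have "bounded_variation_on h 0 1"
    unfolding bounded_variation_on_def
  proof (intro exI[of _ "2 * (2 * C) + 2 * (2 * C + B0)"] allI impI)
    fix ps :: "real list" assume ps: "sorted ps \<and> set ps \<subseteq> {0..1}"
    have "(\<Sum>i < length ps - 1. \<bar>h (ps!(i+1)) - h (ps!i)\<bar>) \<le>
       (\<Sum>i < length ps - 1. \<bar>w1 (ps!(i+1)) - w1 (ps!i)\<bar>) + (\<Sum>i < length ps - 1. \<bar>w2 (ps!(i+1)) - w2 (ps!i)\<bar>)"
      by (rule bv_diff[OF hw])
    also have "\<dots> \<le> 2 * (2 * C) + 2 * (2 * C + B0)"
    proof (rule add_mono)
      show "(\<Sum>i < length ps - 1. \<bar>w1 (ps!(i+1)) - w1 (ps!i)\<bar>) \<le> 2 * (2 * C)"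
        by (rule bv_mono[of 0 1 w1 "2 * C"]) (use w1m w1b ps B0 in \<open>auto simp: C_def\<close>)
      show "(\<Sum>i < length ps - 1. \<bar>w2 (ps!(i+1)) - w2 (ps!i)\<bar>) \<le> 2 * (2 * C + B0)"
        by (rule bv_mono[of 0 1 w2 "2 * C + B0"]) (use w2m w2b ps B0 in \<open>auto simp: C_def\<close>)
    qed
    finally show "(\<Sum>i < length ps - 1. \<bar>h (ps!(i+1)) - h (ps!i)\<bar>) \<le> 2 * (2 * C) + 2 * (2 * C + B0)" .
  qed
  then show "\<exists>h. (\<forall>x\<in>diff_points F. h x = ln (deriv F x)) \<and> (\<forall>x. h (x + 1) = h x)
               \<and> bounded_variation_on h 0 1" using hD hp by blast
 qed
qed

end



locale bs =
  fixes b :: "real \<Rightarrow> real" and \<theta> bM :: real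
  assumes b_pos: "\<forall>x\<in>{-1/2..1/2}. b x > 0"
    and b_even: "\<forall>x\<in>{-1/2..1/2}. b (- x) = b x"
    and b_concave: "concave_on {-1/2..1/2} b"
    and b_noninc: "\<forall>x y. 0 \<le> x \<and> x \<le> y \<and> y \<le> 1/2 \<longrightarrow> b y \<le> b x"
    and b_nonconst: "b (1/2) < b 0"
    and bM: "(b has_real_derivative bM) (at (-1/2) within {-1/2..1/2})"
    and \<theta>_low: "arctan bM < \<theta>" and \<theta>_up: "\<theta> < pi/2"
begin

lemma sig_lim: "((\<lambda>y. (b y - b (-1/2)) / (y + 1/2)) \<longlongrightarrow> bM) (at_right (-1/2))"
proof -
  have "((\<lambda>y. (b y - b (-1/2)) / (y - (-1/2))) \<longlongrightarrow> bM) (at (-1/2) within {-1/2..1/2})"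
    using bM unfolding has_field_derivative_iff .
  moreover have "at (-1/2) within {-1/2..1/2::real} = at_right (-1/2)"
    by (rule at_within_Icc_at_right) simp
  ultimately show ?thesis by simp
qed

lemma S1: assumes "-1/2 < y" "y \<le> 1/2" shows "sl b (-1/2) y \<le> bM"
proof (rule tendsto_lowerbound[OF sig_lim])
  show "eventually (\<lambda>z. sl b (-1/2) y \<le> (b z - b (-1/2)) / (z + 1/2)) (at_right (-1/2))"
    unfolding eventually_at_right_field
  proof (intro exI[of _ y] conjI allI impI)
    fix z assume "-1/2 < z" "z < y"
    then have "sl b (-1/2) y \<le> sl b (-1/2) z" using conc_slope(1)[OF b_concave, of "-1/2" y z] assms by auto
    then show "sl b (-1/2) y \<le> (b z - b (-1/2)) / (z + 1/2)" by (simp add: sl_def)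
  qed (use assms in auto)
qed simp

lemma S2: assumes "-1/2 \<le> x" "x < y" "y \<le> 1/2" shows "sl b x y \<le> bM" "- bM \<le> sl b x y"
proof -
  have up: "sl b x y \<le> bM" if "-1/2 \<le> x" "x < y" "y \<le> 1/2" for x y
  proof (cases "x = -1/2")
    case True then show ?thesis using S1[of y] that by simp
  next
    case False
    then have "sl b x y \<le> sl b (-1/2) y" using conc_slope(2)[OF b_concave, of "-1/2" y x] that by auto
    then show ?thesis using S1[of y] that by simp
  qed
  show "sl b x y \<le> bM" using up assms by blast
  have "sl b (-y) (-x) = (b x - b y) / (y - x)" using b_even assms unfolding sl_def by simp
  also have "\<dots> = - sl b x y" unfolding sl_def by (simp add: minus_divide_left)
  finally have "sl b (-y) (-x) = - sl b x y" .
  then show "- bM \<le> sl b x y" using up[of "-y" "-x"] assms by simp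
qed

lemma bM_pos: "bM > 0"
proof -
  have "b (-1/2) = b (1/2)" using b_even by (auto dest: bspec[of _ _ "1/2"])
  then have "sl b (-1/2) 0 > 0" using b_nonconst unfolding sl_def by simp
  then show ?thesis using S1[of 0] by simp
qed

lemma b_lip: assumes "x \<in> {-1/2..1/2}" "y \<in> {-1/2..1/2}" shows "\<bar>b y - b x\<bar> \<le> bM * \<bar>y - x\<bar>"
proof -
  have *: "\<bar>b y - b x\<bar> \<le> bM * \<bar>y - x\<bar>" if "-1/2 \<le> x" "x < y" "y \<le> 1/2" for x y
  proof -
    have "sl b x y \<le> bM" "- bM \<le> sl b x y" using S2 that by auto
    then have "b y - b x \<le> bM * (y - x)" "- bM * (y - x) \<le> b y - b x"
      using that unfolding sl_def by (auto simp: field_simps)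
    then show ?thesis using that by (simp add: abs_le_iff)
  qed
  consider "x < y" | "x = y" | "y < x" by linarith
  then show ?thesis
  proof cases
    case 1 then show ?thesis using * assms by auto
  next
    case 3 then show ?thesis using *[of y x] assms by (auto simp: abs_minus_commute)
  qed simp
qed

definition c where "c = cot \<theta>"

lemma c_facts: "0 < c" "c * bM < 1"
proof -
  have "arctan 0 < arctan bM" using bM_pos by (simp only: arctan_less_iff)
  then have "0 < arctan bM" by (simp only: arctan_zero_zero)
  then have t0: "0 < \<theta>" using \<theta>_low by linarith
  have s: "sin \<theta> > 0" using t0 \<theta>_up by (intro sin_gt_zero) auto
  have co: "cos \<theta> > 0" using t0 \<theta>_up by (intro cos_gt_zero) auto
  show "0 < c" unfolding c_def cot_def using s co by simp
  have "arctan bM < arctan (tan \<theta>)" using \<theta>_low arctan_tan[of \<theta>] t0 \<theta>_up by simp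
  then have "bM < sin \<theta> / cos \<theta>" by (simp add: arctan_less_iff tan_def)
  then have "bM * cos \<theta> < sin \<theta>" using co by (simp add: field_simps)
  then show "c * bM < 1" unfolding c_def cot_def using s by (simp add: field_simps)
qed

abbreviation p where "p \<equiv> per_ext b"

lemma pe_shift: "p (X + real_of_int k) = p X"
proof -
  have "\<lfloor>X + real_of_int k + 1/2\<rfloor> = \<lfloor>X + 1/2\<rfloor> + k"
    by (metis add.commute add.left_commute floor_add_int)
  then show ?thesis unfolding per_ext_def by simp
qed

lemma pe_shift1: "p (X + 1) = p X"
  using pe_shift[of X 1] by simp

lemma pe_base: assumes "X \<in> {-1/2..1/2}" shows "p X = b X"
proof (cases "X = 1/2")
  case True
  have "\<lfloor>(1::real)/2 + 1/2\<rfloor> = 1" by simp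
  then have "p X = b (-1/2)" unfolding True per_ext_def by simp
  also have "\<dots> = b (1/2)" using b_even by (auto dest: bspec[of _ _ "1/2"])
  finally show ?thesis using True by metis
next
  case False
  then have "\<lfloor>X + 1/2\<rfloor> = 0" using assms by (simp add: floor_eq_iff)
  then show ?thesis unfolding per_ext_def by simp
qed

lemma pe_red: "X - real_of_int \<lfloor>X + 1/2\<rfloor> \<in> {-1/2..<1/2}"
  by auto linarith+

lemma pe_pos: "p X > 0"
  unfolding per_ext_def using b_pos pe_red[of X] by auto

lemma pe_lip1: assumes "u \<in> {-1/2..1/2}" "u \<le> v" "v \<le> u + 1"
  shows "\<bar>p v - p u\<bar> \<le> bM * (v - u)"
proof (cases "v \<le> 1/2")
  case True
  then show ?thesis using b_lip[of u v] pe_base[of u] pe_base[of v] assms by auto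
next
  case False
  have pv: "p v = b (v - 1)" using pe_shift[of "v - 1" 1] pe_base[of "v - 1"] False assms by auto
  have ph: "p (1/2) = b (-1/2)" using pe_base[of "1/2"] b_even by (auto dest: bspec[of _ _ "1/2"])
  have pu: "p u = b u" using pe_base assms by auto
  have h1: "\<bar>b (v - 1) - b (-1/2)\<bar> \<le> bM * (v - 1/2)" using b_lip[of "-1/2" "v - 1"] False assms by auto
  have h2: "\<bar>b (1/2) - b u\<bar> \<le> bM * (1/2 - u)" using b_lip[of u "1/2"] assms by auto
  have h3: "b (1/2) = b (-1/2)" using b_even by (auto dest: bspec[of _ _ "1/2"])
  have "\<bar>p v - p u\<bar> = \<bar>(b (v - 1) - b (-1/2)) + (b (1/2) - b u)\<bar>" using pv pu h3 by simp
  also have "\<dots> \<le> \<bar>b (v - 1) - b (-1/2)\<bar> + \<bar>b (1/2) - b u\<bar>" by (rule abs_triangle_ineq)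
  also have "\<dots> \<le> bM * (v - 1/2) + bM * (1/2 - u)" using h1 h2 by simp
  also have "\<dots> = bM * (v - u)" by (simp add: algebra_simps)
  finally show ?thesis .
qed

lemma pe_lip2: assumes "u \<le> v" "v \<le> u + 1"
  shows "\<bar>p v - p u\<bar> \<le> bM * (v - u)"
proof -
  define k where "k = \<lfloor>u + 1/2\<rfloor>"
  have "u - real_of_int k \<in> {-1/2..1/2}" using pe_red[of u] unfolding k_def by auto
  then have "\<bar>p (v - real_of_int k) - p (u - real_of_int k)\<bar> \<le> bM * ((v - real_of_int k) - (u - real_of_int k))"
    using assms by (intro pe_lip1) auto
  moreover have "p (v - real_of_int k) = p v" "p (u - real_of_int k) = p u"
    using pe_shift[of "v - real_of_int k" k] pe_shift[of "u - real_of_int k" k] by auto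
  ultimately show ?thesis by simp
qed

lemma pe_lip_le: assumes "u \<le> v" shows "\<bar>p v - p u\<bar> \<le> bM * (v - u)"
proof -
  have "\<forall>u v. u \<le> v \<and> v \<le> u + real n \<longrightarrow> \<bar>p v - p u\<bar> \<le> bM * (v - u)" for n
  proof (induction n)
    case 0 then show ?case by auto
  next
    case (Suc n)
    show ?case
    proof (intro allI impI)
      fix u v assume uv: "u \<le> v \<and> v \<le> u + real (Suc n)"
      show "\<bar>p v - p u\<bar> \<le> bM * (v - u)"
      proof (cases "v \<le> u + 1")
        case True then show ?thesis using pe_lip2 uv by auto
      next
        case False
        have h1: "\<bar>p (u+1) - p u\<bar> \<le> bM * ((u+1) - u)" using pe_lip2[of u "u+1"] by simp
        have h2: "\<bar>p v - p (u+1)\<bar> \<le> bM * (v - (u+1))" using Suc.IH uv False by auto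
        have "\<bar>p v - p u\<bar> = \<bar>(p v - p (u+1)) + (p (u+1) - p u)\<bar>" by simp
        also have "\<dots> \<le> \<bar>p v - p (u+1)\<bar> + \<bar>p (u+1) - p u\<bar>" by (rule abs_triangle_ineq)
        also have "\<dots> \<le> bM * (v - (u+1)) + bM * ((u+1) - u)" using h1 h2 by simp
        also have "\<dots> = bM * (v - u)" by (simp add: algebra_simps)
        finally show ?thesis .
      qed
    qed
  qed
  moreover obtain n :: nat where "v - u \<le> real n" using real_arch_simple[of "v - u"] by blast
  then have "v \<le> u + real n" by simp
  ultimately show ?thesis using assms by blast
qed

lemma pe_lip: "\<bar>p v - p u\<bar> \<le> bM * \<bar>v - u\<bar>"
proof (cases "u \<le> v")
  case True then show ?thesis using pe_lip_le by simp
next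
  case False then show ?thesis using pe_lip_le[of v u] by (simp add: abs_minus_commute)
qed

definition g where "g X = X - p X * c"

lemma g_mono: assumes "u \<le> v" shows "(1 - c * bM) * (v - u) \<le> g v - g u"
proof -
  have "p v - p u \<le> bM * (v - u)" using pe_lip_le[OF assms] by simp
  then have "c * (p v - p u) \<le> c * (bM * (v - u))" using c_facts by (intro mult_left_mono) auto
  then show ?thesis unfolding g_def by (simp add: algebra_simps)
qed

lemma G_mono: assumes "u \<le> v" shows "(1 - c * bM) * (v - u) \<le> (v + p v * c) - (u + p u * c)"
proof -
  have "- bM * (v - u) \<le> p v - p u" using pe_lip_le[OF assms] by (simp add: abs_le_iff)
  then have "c * (- bM * (v - u)) \<le> c * (p v - p u)" using c_facts by (intro mult_left_mono) auto
  then show ?thesis by (simp add: algebra_simps)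
qed

lemma p_cont: "continuous_on UNIV p"
proof (rule lipschitz_on_continuous_on)
  show "bM-lipschitz_on UNIV p"
    by (rule lipschitz_onI) (use pe_lip bM_pos in \<open>auto simp: dist_real_def\<close>)
qed

lemma g_cont: "continuous_on UNIV g"
  unfolding g_def by (intro continuous_intros p_cont[THEN continuous_on_subset]) auto

lemma g_smono: assumes "u < v" shows "g u < g v"
  using g_mono[of u v] assms c_facts by (smt (verit) mult_pos_pos)

lemma g_surj: "\<exists>X. g X = x"
proof -
  define q where "q = c * bM"
  have q: "0 < 1 - q" using c_facts unfolding q_def by simp
  define X2 where "X2 = x + c * p x / (1 - q)"
  have x2: "x \<le> X2" unfolding X2_def using c_facts pe_pos[of x] q by simp
  have "g x \<le> x" unfolding g_def using c_facts pe_pos[of x] by simp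
  moreover have "x \<le> g X2"
  proof -
    have "(1 - q) * (X2 - x) \<le> g X2 - g x" using g_mono[OF x2] unfolding q_def .
    moreover have "(1 - q) * (X2 - x) = c * p x" unfolding X2_def using q by simp
    ultimately show ?thesis unfolding g_def by (simp add: algebra_simps)
  qed
  ultimately show ?thesis
    using IVT'[of g x x X2] x2 g_cont continuous_on_subset by blast
qed

definition Xf where "Xf = hit_abscissa b \<theta>"

lemma gXf: "g (Xf x) = x"
proof -
  have "\<exists>!X. g X = x" using g_surj g_smono by (metis linorder_neqE_linordered_idom order_less_irrefl)
  then have "g (THE X. g X = x) = x" by (rule theI')
  moreover have "(\<lambda>X. g X = x) = (\<lambda>X. X - per_ext b X * cot \<theta> = x)" unfolding g_def c_def ..
  ultimately show ?thesis unfolding Xf_def hit_abscissa_def by simp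
qed

lemma Xf_eq: assumes "g X = x" shows "Xf x = X"
proof (rule ccontr)
  assume "Xf x \<noteq> X"
  then have "g (Xf x) \<noteq> g X" using g_smono by (metis linorder_neqE_linordered_idom order_less_irrefl)
  then show False using gXf assms by simp
qed

lemma Xf_mono: assumes "x \<le> y" shows "Xf x \<le> Xf y"
proof (rule ccontr)
  assume "\<not> Xf x \<le> Xf y"
  then have "g (Xf y) < g (Xf x)" using g_smono by simp
  then show False using gXf assms by simp
qed

lemma Xf_smono: assumes "x < y" shows "Xf x < Xf y"
proof -
  have "Xf x \<noteq> Xf y"
  proof
    assume "Xf x = Xf y"
    then have "g (Xf x) = g (Xf y)" by simp
    then show False using gXf assms by simp
  qed
  then show ?thesis using Xf_mono[of x y] assms by simp
qed

lemma Xf_lip: assumes "x \<le> y" shows "(1 - c * bM) * (Xf y - Xf x) \<le> y - x"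
  using g_mono[OF Xf_mono[OF assms]] gXf by simp

lemma Xf_per: "Xf (x + 1) = Xf x + 1"
proof -
  have "g (Xf x + 1) = x + 1" using gXf[of x] unfolding g_def pe_shift1 by simp
  then show ?thesis by (rule Xf_eq)
qed

lemma Xf_cont: "continuous_on UNIV Xf"
proof (rule lipschitz_on_continuous_on)
  have q: "0 < 1 - c * bM" using c_facts by simp
  show "(1 / (1 - c * bM))-lipschitz_on UNIV Xf"
  proof (rule lipschitz_onI)
    fix x y :: real
    have *: "\<bar>Xf y - Xf x\<bar> \<le> \<bar>y - x\<bar> / (1 - c * bM)" if "x \<le> y" for x y
      using Xf_lip[OF that] Xf_mono[OF that] q that by (simp add: field_simps)
    show "dist (Xf x) (Xf y) \<le> 1 / (1 - c * bM) * dist x y"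
      using *[of x y] *[of y x] unfolding dist_real_def
      by (cases "x \<le> y") (auto simp: abs_minus_commute)
  qed (use q in simp)
qed

end



lemma fr: fixes d c r :: real assumes "d \<noteq> 0"
  shows "(1 + c * (r / d)) / (1 - c * (r / d)) = (d + c * r) / (d - c * r)"
proof -
  have "1 + c * (r / d) = (d + c * r) / d" "1 - c * (r / d) = (d - c * r) / d" using assms by (simp_all add: field_simps)
  then show ?thesis using assms by simp
qed

lemma fl: fixes x y z w :: real assumes "0 < y" "0 < w" "x * w \<le> z * y" shows "x / y \<le> z / w"
  using assms by (simp add: field_simps)

lemma cvx_comb: fixes lo hi x1 x2 u v :: real
  assumes "lo \<le> x1" "x1 \<le> hi" "lo \<le> x2" "x2 \<le> hi" "0 \<le> u" "0 \<le> v" "u + v = 1"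
  shows "lo \<le> u * x1 + v * x2" "u * x1 + v * x2 \<le> hi"
proof -
  have "u * lo \<le> u * x1" "v * lo \<le> v * x2" "u * x1 \<le> u * hi" "v * x2 \<le> v * hi"
    using assms by (auto intro: mult_left_mono)
  moreover have "u * lo + v * lo = lo" "u * hi + v * hi = hi" using assms(7) by (metis distrib_right mult_1)+
  ultimately show "lo \<le> u * x1 + v * x2" "u * x1 + v * x2 \<le> hi" by linarith+
qed

context bs begin

definition FF where "FF = return_lift b \<theta>"

lemma FF_eq: "FF x = Xf x + p (Xf x) * c"
  unfolding FF_def return_lift_def Xf_def c_def ..

lemma Xf_eq2: "Xf x = x + p (Xf x) * c"
  using gXf[of x] unfolding g_def by simp

lemma FF_cont: "continuous_on UNIV FF"
proof -
  have "continuous_on UNIV (p \<circ> Xf)"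
    using continuous_on_compose[OF Xf_cont continuous_on_subset[OF p_cont subset_UNIV]] .
  then have "continuous_on UNIV (\<lambda>x. Xf x + (p \<circ> Xf) x * c)"
    by (rule continuous_on_add[OF Xf_cont continuous_on_mult_right])
  then show ?thesis unfolding FF_eq[abs_def] by simp
qed

lemma FF_smono: "strict_mono FF"
proof (rule strict_monoI)
  fix x y :: real assume "x < y"
  then have "Xf x < Xf y" by (rule Xf_smono)
  then have "(1 - c * bM) * (Xf y - Xf x) \<le> FF y - FF x" using G_mono[of "Xf x" "Xf y"] unfolding FF_eq by simp
  moreover have "0 < (1 - c * bM) * (Xf y - Xf x)" using c_facts \<open>Xf x < Xf y\<close> by simp
  ultimately show "FF x < FF y" by simp
qed

lemma FF_per: "FF (x + 1) = FF x + 1"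
  unfolding FF_eq Xf_per pe_shift1 by simp

definition Aq where "Aq = (1 + c * bM) / (1 - c * bM)"
definition Bq where "Bq = (1 - c * bM) / (1 + c * bM)"

lemma q_facts: "0 < c * bM" "c * bM < 1"
  using c_facts bM_pos by auto

lemma Bq_pos: "0 < Bq" unfolding Bq_def using q_facts by simp

lemma BqAq: "Bq < Aq"
proof -
  have "Bq < 1" unfolding Bq_def using q_facts by simp
  moreover have "1 < Aq" unfolding Aq_def using q_facts by simp
  ultimately show ?thesis by simp
qed

lemma chord: assumes "s < t" shows "Bq \<le> sl FF s t \<and> sl FF s t \<le> Aq"
proof -
  define U where "U = Xf s"
  define V where "V = Xf t"
  have UV: "U < V" unfolding U_def V_def using Xf_smono[OF assms] .
  define a where "a = V - U"
  define e where "e = c * (p V - p U)"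
  define q where "q = c * bM"
  have a: "0 < a" unfolding a_def using UV by simp
  have "\<bar>p V - p U\<bar> \<le> bM * a" using pe_lip_le[of U V] UV unfolding a_def by simp
  then have "c * \<bar>p V - p U\<bar> \<le> c * (bM * a)" using c_facts by (intro mult_left_mono) auto
  then have eb: "\<bar>e\<bar> \<le> q * a" unfolding e_def q_def using c_facts by (simp add: abs_mult)
  have q: "0 < q" "q < 1" using q_facts unfolding q_def by auto
  have "q * a < a" using q a by simp
  then have den: "0 < a - e" using eb by (simp add: abs_le_iff)
  have ft: "FF t - FF s = a + e" unfolding FF_eq a_def e_def U_def V_def by (simp add: algebra_simps)
  have ts: "t - s = a - e" using Xf_eq2[of t] Xf_eq2[of s] unfolding a_def e_def U_def V_def by (simp add: algebra_simps)
  have sl: "sl FF s t = (a + e) / (a - e)" unfolding sl_def ft ts ..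
  have e1: "- (q * a) \<le> e" "e \<le> q * a" using eb by (simp_all add: abs_le_iff)
  have "Bq \<le> (a + e) / (a - e)" unfolding Bq_def q_def[symmetric]
  proof (rule fl)
    show "(1 - q) * (a - e) \<le> (a + e) * (1 + q)" using e1 by (simp add: algebra_simps)
  qed (use q den in auto)
  moreover have "(a + e) / (a - e) \<le> Aq" unfolding Aq_def q_def[symmetric]
  proof (rule fl)
    show "(a + e) * (1 - q) \<le> (1 + q) * (a - e)" using e1 by (simp add: algebra_simps)
  qed (use q den in auto)
  ultimately show ?thesis using sl by simp
qed

definition a0 where "a0 = g (-1/2)"

lemma Xf_a0: "Xf a0 = -1/2" unfolding a0_def by (rule Xf_eq) simp

lemma Xf_a1: "Xf (a0 + 1) = 1/2" using Xf_per[of a0] Xf_a0 by simp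

lemma Xf_am1: "Xf (a0 - 1) = -3/2" using Xf_per[of "a0 - 1"] Xf_a0 by simp

lemma FF_conc: "concave_on {a0..a0+1} FF"
  unfolding concave_on_iff
proof (intro conjI ballI allI impI)
  show "convex {a0..a0+1}" by (rule convex_real_interval)
  fix x1 x2 u v :: real
  assume x1: "x1 \<in> {a0..a0+1}" and x2: "x2 \<in> {a0..a0+1}" and u: "0 \<le> u" and v: "0 \<le> v" and uv: "u + v = 1"
  have XI: "Xf z \<in> {-1/2..1/2}" if "z \<in> {a0..a0+1}" for z
    using Xf_mono[of a0 z] Xf_mono[of z "a0+1"] Xf_a0 Xf_a1 that by auto
  define X1 where "X1 = Xf x1"
  define X2 where "X2 = Xf x2"
  define q1 where "q1 = p X1"
  define q2 where "q2 = p X2"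
  define x where "x = u * x1 + v * x2"
  define y where "y = u * q1 + v * q2"
  define Z where "Z = u * X1 + v * X2"
  define W where "W = Xf x"
  have X1I: "X1 \<in> {-1/2..1/2}" and X2I: "X2 \<in> {-1/2..1/2}" unfolding X1_def X2_def using XI x1 x2 by auto
  have xI: "x \<in> {a0..a0+1}" unfolding x_def using cvx_comb[of a0 x1 "a0+1" x2 u v] x1 x2 u v uv by auto
  have ZI: "Z \<in> {-1/2..1/2}" unfolding Z_def using cvx_comb[of "-1/2" X1 "1/2" X2 u v] X1I X2I u v uv by auto
  have WI: "W \<in> {-1/2..1/2}" unfolding W_def using XI xI by auto
  have e1: "X1 = x1 + c * q1" using Xf_eq2[of x1] unfolding X1_def q1_def by (simp add: algebra_simps)
  have e2: "X2 = x2 + c * q2" using Xf_eq2[of x2] unfolding X2_def q2_def by (simp add: algebra_simps)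
  have ZE: "Z = x + c * y"
    unfolding Z_def x_def y_def using e1 e2 by (simp add: algebra_simps)
  have WE: "W = x + c * p W" using Xf_eq2[of x] unfolding W_def by (simp add: algebra_simps)
  have "b (u *\<^sub>R X1 + v *\<^sub>R X2) \<ge> u * b X1 + v * b X2"
    using b_concave X1I X2I u v uv unfolding concave_on_iff by blast
  then have pZ: "p Z \<ge> y" unfolding y_def q1_def q2_def Z_def
    using pe_base[OF X1I] pe_base[OF X2I] pe_base[OF ZI[unfolded Z_def]] by simp
  have pW: "p W \<ge> y"
  proof (rule ccontr)
    assume "\<not> y \<le> p W"
    then have lt: "p W < y" by simp
    then have "c * p W < c * y" using c_facts by simp
    then have WZ: "W < Z" using WE ZE by simp
    have "p Z - p W \<le> bM * (Z - W)" using pe_lip_le[of W Z] WZ by simp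
    also have "Z - W = c * (y - p W)" using WE ZE by (simp add: algebra_simps)
    finally have "p Z - p W \<le> (c * bM) * (y - p W)" by (simp add: algebra_simps)
    also have "\<dots> < y - p W" using q_facts lt by simp
    finally show False using pZ by simp
  qed
  have "FF x = x + 2 * c * p W" unfolding FF_eq W_def using Xf_eq2[of x] by (simp add: algebra_simps)
  moreover have "FF x1 = x1 + 2 * c * q1" unfolding FF_eq q1_def X1_def using Xf_eq2[of x1] by (simp add: algebra_simps)
  moreover have "FF x2 = x2 + 2 * c * q2" unfolding FF_eq q2_def X2_def using Xf_eq2[of x2] by (simp add: algebra_simps)
  moreover have "2 * c * y \<le> 2 * c * p W" using pW c_facts by simp
  ultimately have "u * FF x1 + v * FF x2 \<le> FF x" unfolding x_def y_def by (simp add: algebra_simps)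
  then show "u * FF x1 + v * FF x2 \<le> FF (u *\<^sub>R x1 + v *\<^sub>R x2)" unfolding x_def by simp
qed

lemma Xf_tendsto: "(Xf \<longlongrightarrow> Xf x) (at x)"
  using Xf_cont by (simp add: continuous_on_eq_continuous_at isContD)

lemma limA: "(sl FF a0 \<longlongrightarrow> Aq) (at_right a0)"
proof -
  define \<sigma> where "\<sigma> y = (b y - b (-1/2)) / (y + 1/2)" for y
  have "(Xf \<longlongrightarrow> -1/2) (at_right a0)"
    using Xf_tendsto[of a0] Xf_a0 filterlim_at_split by auto
  moreover have "eventually (\<lambda>t. Xf t > -1/2) (at_right a0)"
    unfolding eventually_at_right_field using Xf_smono[of a0] Xf_a0 by (intro exI[of _ "a0+1"]) auto
  ultimately have fl: "filterlim Xf (at_right (-1/2)) (at_right a0)"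
    by (rule tendsto_imp_filterlim_at_right)
  have "((\<lambda>t. \<sigma> (Xf t)) \<longlongrightarrow> bM) (at_right a0)"
    unfolding \<sigma>_def by (rule filterlim_compose[OF sig_lim fl])
  then have "((\<lambda>t. (1 + c * \<sigma> (Xf t)) / (1 - c * \<sigma> (Xf t))) \<longlongrightarrow> (1 + c * bM) / (1 - c * bM)) (at_right a0)"
    using q_facts by (intro tendsto_intros) auto
  moreover have "eventually (\<lambda>t. (1 + c * \<sigma> (Xf t)) / (1 - c * \<sigma> (Xf t)) = sl FF a0 t) (at_right a0)"
    unfolding eventually_at_right_field
  proof (intro exI[of _ "a0+1"] conjI allI impI)
    fix t assume t: "a0 < t" "t < a0 + 1"
    define X where "X = Xf t"
    have X: "-1/2 < X" "X < 1/2" unfolding X_def using Xf_smono[OF t(1)] Xf_smono[OF t(2)] Xf_a0 Xf_a1 by auto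
    have pX: "p X = b X" using pe_base X by auto
    have p0: "p (-1/2) = b (-1/2)" using pe_base by auto
    have "sl FF a0 t = ((X + 1/2) + c * (b X - b (-1/2))) / ((X + 1/2) - c * (b X - b (-1/2)))"
      unfolding sl_def FF_eq using Xf_eq2[of t] Xf_eq2[of a0] Xf_a0 pX p0 unfolding X_def
      by (simp add: algebra_simps)
    also have "\<dots> = (1 + c * \<sigma> X) / (1 - c * \<sigma> X)" unfolding \<sigma>_def using X
      by (subst fr) auto
    finally show "(1 + c * \<sigma> (Xf t)) / (1 - c * \<sigma> (Xf t)) = sl FF a0 t" unfolding X_def by simp
  qed simp
  ultimately show ?thesis unfolding Aq_def using tendsto_cong by force
qed

lemma limB: "(sl FF a0 \<longlongrightarrow> Bq) (at_left a0)"
proof -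
  define \<sigma> where "\<sigma> y = (b y - b (-1/2)) / (y + 1/2)" for y
  define \<psi> where "\<psi> t = - (Xf t + 1)" for t
  have "(Xf \<longlongrightarrow> -1/2) (at_left a0)"
    using Xf_tendsto[of a0] Xf_a0 filterlim_at_split by auto
  then have "(\<psi> \<longlongrightarrow> -1/2) (at_left a0)" unfolding \<psi>_def by (auto intro!: tendsto_eq_intros)
  moreover have "eventually (\<lambda>t. \<psi> t > -1/2) (at_left a0)"
    unfolding eventually_at_left_field
  proof (intro exI[of _ "a0-1"] conjI allI impI)
    fix t assume "a0 - 1 < t" "t < a0"
    then have "Xf t < -1/2" using Xf_smono[of t a0] Xf_a0 by simp
    then show "\<psi> t > -1/2" unfolding \<psi>_def by linarith
  qed simp
  ultimately have fl: "filterlim \<psi> (at_right (-1/2)) (at_left a0)"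
    by (rule tendsto_imp_filterlim_at_right)
  have "((\<lambda>t. \<sigma> (\<psi> t)) \<longlongrightarrow> bM) (at_left a0)"
    unfolding \<sigma>_def by (rule filterlim_compose[OF sig_lim fl])
  then have "((\<lambda>t. (1 + (- c) * \<sigma> (\<psi> t)) / (1 - (- c) * \<sigma> (\<psi> t))) \<longlongrightarrow> (1 + (- c) * bM) / (1 - (- c) * bM)) (at_left a0)"
    using q_facts by (intro tendsto_intros) auto
  moreover have "eventually (\<lambda>t. (1 + (- c) * \<sigma> (\<psi> t)) / (1 - (- c) * \<sigma> (\<psi> t)) = sl FF a0 t) (at_left a0)"
    unfolding eventually_at_left_field
  proof (intro exI[of _ "a0-1"] conjI allI impI)
    fix t assume t: "a0 - 1 < t" "t < a0"
    define X where "X = Xf t"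
    define Z where "Z = \<psi> t"
    have X: "-3/2 < X" "X < -1/2" unfolding X_def using Xf_smono[OF t(1)] Xf_smono[OF t(2)] Xf_a0 Xf_am1 by auto
    have ZX: "Z = - (X + 1)" unfolding Z_def X_def \<psi>_def ..
    have Z: "-1/2 < Z" "Z < 1/2" using X ZX by auto
    have "p X = p (X + 1)" using pe_shift1[of X] by simp
    also have "\<dots> = b (X + 1)" using pe_base X by auto
    also have "\<dots> = b Z" using b_even Z ZX by (auto dest: bspec[of _ _ "X + 1"])
    finally have pX: "p X = b Z" .
    have p0: "p (-1/2) = b (-1/2)" using pe_base by auto
    have "sl FF a0 t = ((Z + 1/2) + (- c) * (b Z - b (-1/2))) / ((Z + 1/2) - (- c) * (b Z - b (-1/2)))"
    proof -
      have tX: "X = t + c * b Z" using Xf_eq2[of t] pX unfolding X_def by (simp add: algebra_simps)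
      have a0e: "-1/2 = a0 + c * b (-1/2)" using Xf_eq2[of a0] Xf_a0 p0 by (simp add: algebra_simps)
      have FFt: "FF t = X + c * b Z" unfolding FF_eq using pX unfolding X_def by (simp add: algebra_simps)
      have FFa0: "FF a0 = -1/2 + c * b (-1/2)" unfolding FF_eq using Xf_a0 p0 by (simp add: algebra_simps)
      have XZ: "X = - Z - 1" using ZX by simp
      have N: "FF t - FF a0 = - (Z + 1/2) + c * (b Z - b (-1/2))" unfolding FFt FFa0 XZ by (simp add: algebra_simps)
      have D: "t - a0 = - (Z + 1/2) - c * (b Z - b (-1/2))" using tX a0e XZ by (simp add: algebra_simps)
      have "sl FF a0 t = (- (Z + 1/2) + c * (b Z - b (-1/2))) / (- (Z + 1/2) - c * (b Z - b (-1/2)))"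
        unfolding sl_def N D ..
      also have "\<dots> = (- ((Z + 1/2) - c * (b Z - b (-1/2)))) / (- ((Z + 1/2) + c * (b Z - b (-1/2))))"
        by (rule arg_cong2[where f="(/)"]) (simp_all add: algebra_simps)
      also have "\<dots> = ((Z + 1/2) - c * (b Z - b (-1/2))) / ((Z + 1/2) + c * (b Z - b (-1/2)))"
        by (rule minus_divide_divide)
      also have "\<dots> = ((Z + 1/2) + (- c) * (b Z - b (-1/2))) / ((Z + 1/2) - (- c) * (b Z - b (-1/2)))"
        by simp
      finally show ?thesis .
    qed
    also have "\<dots> = (1 + (- c) * \<sigma> Z) / (1 - (- c) * \<sigma> Z)" unfolding \<sigma>_def using Z
      by (subst fr) auto
    finally show "(1 + (- c) * \<sigma> (\<psi> t)) / (1 - (- c) * \<sigma> (\<psi> t)) = sl FF a0 t" unfolding Z_def by simp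
  qed simp
  ultimately show ?thesis unfolding Bq_def using tendsto_cong by force
qed

lemma cc_inst: "cc FF a0 Bq Aq Aq Bq"
  by unfold_locales (use FF_cont FF_per FF_conc Bq_pos chord limA limB BqAq in auto)

end

theorem lemma2p3:
  fixes b :: "real \<Rightarrow> real" and \<theta> bM :: real
  assumes b_pos: "\<forall>x\<in>{-1/2..1/2}. b x > 0"
    and b_even: "\<forall>x\<in>{-1/2..1/2}. b (- x) = b x"
    and b_pC1: "piecewise_C1_on b (-1/2) (1/2)"
    and b_concave: "concave_on {-1/2..1/2} b"
    and b_noninc: "\<forall>x y. 0 \<le> x \<and> x \<le> y \<and> y \<le> 1/2 \<longrightarrow> b y \<le> b x"
    and b_nonconst: "b (1/2) < b 0"
    and bM: "(b has_real_derivative bM) (at (-1/2) within {-1/2..1/2})"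
    and \<theta>_low: "arctan bM < \<theta>" and \<theta>_up: "\<theta> < pi/2"
  defines "F \<equiv> return_lift b \<theta>"
  shows
    "continuous_on UNIV F \<and> strict_mono F \<and> (\<forall>x. F (x + 1) = F x + 1)
     \<and> (\<forall>x. (\<exists>l. (deriv F \<longlongrightarrow> l) (at x within ({x<..} \<inter> diff_points F)))
           \<and> (\<exists>l. (deriv F \<longlongrightarrow> l) (at x within ({..<x} \<inter> diff_points F))))
     \<and> (\<exists>a0. {x. jump_deriv F x > 0} = {a0 + real_of_int k | k. True}
        \<and> countable {x. jump_deriv F x < 0}
        \<and> (\<forall>x. jump_deriv F x = 0 \<longrightarrow>
              x \<in> diff_points F \<and> continuous (at x within diff_points F) (deriv F))
        \<and> (\<forall>x. right_lim_deriv F x > 0 \<and> left_lim_deriv F x > 0)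
        \<and> concave_on {a0<..<a0+1} F
        \<and> (\<exists>h. (\<forall>x\<in>diff_points F. h x = ln (deriv F x)) \<and> (\<forall>x. h (x + 1) = h x)
               \<and> bounded_variation_on h 0 1))"
  proof -
  interpret bs b \<theta> bM using b_pos b_even b_concave b_noninc b_nonconst bM \<theta>_low \<theta>_up
    by unfold_locales
  interpret cc FF a0 Bq Aq Aq Bq by (rule cc_inst)
  have FF: "F = FF" unfolding F_def FF_def ..
  show ?thesis unfolding FF using FF_cont FF_smono FF_per main by blast
qed

end
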